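(* Let $(V,A,\succ)$ be an election, let $0<B\le|A|$, $s>0$, and let $\mathcal{I}$ be a probability distribution on $[0,1]$ with continuous cumulative distribution function. Then there exists an $s$-SLEO with income distribution $\mathcal{I}$ and total budget $B$.
   Context: An election $(V,A,\succ)$: finite nonempty voter set $V$ with $n=|V|$, finite candidate set $A$, and a strict linear order $\succ_v$ on $A$ for each voter $v$. Extend $\succ_v$ to $A\cup\{\emptyset\}$ by placing the outside option $\emptyset$ strictly below every candidate. Given a price vector $p_v\in[0,1]^{A\cup\{\emptyset\}}$ with $p_{v,\emptyset}=0$ and an income $b\ge0$, voter $v$'s demand is the $\succ_v$-maximal element of $\{a\in A\cup\{\emptyset\}: p_{v,a}\le b\}$; the random demand $\mathcal{D}_v(p_v,\mathcal{I})$ is this demand when $b\sim\mathcal{I}$. Given $s>0$, $B>0$ and $\mathcal{I}$ supported on $[0,1]$, an $s$-SLEO $(x,y,p)$ consists of prices $p_v\in[0,1]^{A\cup\{\emptyset\}}$ with $p_{v,\emptyset}=0$ and consumptions $x_v\in[0,1]^{A\cup\{\emptyset\}}$ for each $v\in V$, and $y\in[0,1]^A$, such that: (1) $x_{v,a}=\Pr[\mathcal{D}_v(p_v,\mathcal{I})=a]$ for all $v\in V$, $a\in A\cup\{\emptyset\}$; (2) for all $v\in V$, $a\in A$: $s\cdot x_{v,a}\le y_a$, and if $s\cdot x_{v,a}<y_a$ then $p_{v,a}=0$; (3) $y$ maximizes $\sum_{a\in A}\big(\sum_{v\in V}p_{v,a}\big)z_a$ over all $z\in[0,1]^A$ with $\sum_{a\in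 A}z_a=B$. *)

theory Defs
  imports "HOL-Probability.Probability"
begin

(* Candidates are elements of A :: 'a set; the outside option \<emptyset> is None,
   a candidate a is Some a.  Voter v's preference is a strict linear order R v on A
   ((a,b) \<in> R v means a \<succ>_v b). *)

definition election :: "'v set \<Rightarrow> 'a set \<Rightarrow> ('v \<Rightarrow> ('a \<times> 'a) set) \<Rightarrow> bool" where
  "election V A R \<longleftrightarrow> finite V \<and> V \<noteq> {} \<and> finite A \<and>
     (\<forall>v\<in>V. R v \<subseteq> A \<times> A \<and> strict_linear_order_on A (R v))"

definition ext_pref :: "('a \<times> 'a) set \<Rightarrow> 'a option \<Rightarrow> 'a option \<Rightarrow> bool" where
  "ext_pref R c d \<longleftrightarrow> (case (c, d) of
      (Some a, None) \<Rightarrow> True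
    | (Some a, Some b) \<Rightarrow> (a, b) \<in> R
    | _ \<Rightarrow> False)"

definition affordable :: "'a set \<Rightarrow> ('a option \<Rightarrow> real) \<Rightarrow> real \<Rightarrow> 'a option set" where
  "affordable A p b = {c \<in> insert None (Some ` A). p c \<le> b}"

definition demand :: "'a set \<Rightarrow> ('a \<times> 'a) set \<Rightarrow> ('a option \<Rightarrow> real) \<Rightarrow> real \<Rightarrow> 'a option" where
  "demand A R p b = (THE c. c \<in> affordable A p b \<and>
       (\<forall>d\<in>affordable A p b. d \<noteq> c \<longrightarrow> ext_pref R c d))"

definition SLEO ::
  "'v set \<Rightarrow> 'a set \<Rightarrow> ('v \<Rightarrow> ('a \<times> 'a) set) \<Rightarrow> real \<Rightarrow> real \<Rightarrow> real measure \<Rightarrow>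
   ('v \<Rightarrow> 'a option \<Rightarrow> real) \<Rightarrow> ('a \<Rightarrow> real) \<Rightarrow> ('v \<Rightarrow> 'a option \<Rightarrow> real) \<Rightarrow> bool" where
  "SLEO V A R s B I x y p \<longleftrightarrow>
     \<comment> \<open>prices and consumptions in [0,1], outside option free\<close>
     (\<forall>v\<in>V. p v None = 0 \<and> (\<forall>c\<in>insert None (Some ` A). p v c \<in> {0..1} \<and> x v c \<in> {0..1}))
   \<and> (\<forall>a\<in>A. y a \<in> {0..1})
     \<comment> \<open>(1) consumption equals the probability of demand\<close>
   \<and> (\<forall>v\<in>V. \<forall>c\<in>insert None (Some ` A).
        x v c = measure I {b. demand A (R v) (p v) b = c})
     \<comment> \<open>(2) supply constraints and complementary slackness\<close>
   \<and> (\<forall>v\<in>V. \<forall>a\<in>A. s * x v (Some a) \<le> y a \<and>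
        (s * x v (Some a) < y a \<longrightarrow> p v (Some a) = 0))
     \<comment> \<open>(3) y maximizes revenue over z \<in> [0,1]^A with \<Sum>z = B\<close>
   \<and> (\<Sum>a\<in>A. y a) = B
   \<and> (\<forall>z. (\<forall>a\<in>A. z a \<in> {0..1}) \<and> (\<Sum>a\<in>A. z a) = B \<longrightarrow>
        (\<Sum>a\<in>A. (\<Sum>v\<in>V. p v (Some a)) * z a) \<le> (\<Sum>a\<in>A. (\<Sum>v\<in>V. p v (Some a)) * y a))"

end

theory Submission
  imports Defs "HOL-Homology.Homology"
begin


lemma cont_coord_nat [continuous_intros]:
  "continuous_on S (\<lambda>x::'i\<Rightarrow>real. x i)"
  by (rule continuous_on_subset[OF continuous_on_product_coordinates]) simp

lemma homotopic_canonI: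
  assumes "continuous_on ({0..1::real} \<times> X) h" "h \<in> ({0..1} \<times> X) \<rightarrow> Y"
    "\<And>x. x \<in> X \<Longrightarrow> h (0, x) = p x" "\<And>x. x \<in> X \<Longrightarrow> h (1, x) = q x"
  shows "homotopic_with_canon (\<lambda>x. True) X Y p q"
  apply (subst homotopic_with)
   apply simp
  apply (rule exI[of _ h])
  using assms by (simp add: subtopology_Times[symmetric] continuous_map_subtopology_eu)

definition sqn :: "nat \<Rightarrow> (nat \<Rightarrow> real) \<Rightarrow> real" where
  "sqn n x = (\<Sum>i<n. (x i)^2)"

lemma sqn_nonneg: "0 \<le> sqn n x" unfolding sqn_def by (simp add: sum_nonneg)

lemma sqn_zero_iff: "sqn n x = 0 \<longleftrightarrow> (\<forall>i<n. x i = 0)"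
  unfolding sqn_def by (subst sum_nonneg_eq_0_iff) auto

lemma inner_le: "(\<Sum>i<n. x i * y i) \<le> (sqn n x + sqn n y) / 2"
proof -
  have "(\<Sum>i<n. x i * y i) \<le> (\<Sum>i<n. ((x i)^2 + (y i)^2)/2)"
    by (intro sum_mono) (use sum_squares_bound[of "x i" "y i" for i] in \<open>auto simp: field_simps\<close>)
  also have "\<dots> = (sqn n x + sqn n y) / 2"
    unfolding sqn_def by (simp add: sum.distrib sum_divide_distrib[symmetric])
  finally show ?thesis .
qed

lemma brouwer_disc:
  fixes f :: "(nat \<Rightarrow> real) \<Rightarrow> (nat \<Rightarrow> real)"
  assumes n: "0 < n"
    and cont: "continuous_on {x. sqn n x \<le> 1 \<and> (\<forall>i\<ge>n. x i = 0)} f"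
    and into: "f \<in> {x. sqn n x \<le> 1 \<and> (\<forall>i\<ge>n. x i = 0)} \<rightarrow> {x. sqn n x \<le> 1 \<and> (\<forall>i\<ge>n. x i = 0)}"
  shows "\<exists>x. sqn n x \<le> 1 \<and> (\<forall>i\<ge>n. x i = 0) \<and> f x = x"
proof (rule ccontr)
  define D where "D = {x. sqn n x \<le> 1 \<and> (\<forall>i\<ge>n. x i = 0)}"
  define S where "S = {x. sqn n x = 1 \<and> (\<forall>i\<ge>n. x i = 0)}"
  assume "\<not> ?thesis"
  then have nofix: "\<And>x. x \<in> D \<Longrightarrow> f x \<noteq> x" unfolding D_def by blast
  define d where "d x = (\<lambda>i. x i - f x i)" for x
  define u where "u x = (\<lambda>i. d x i / sqrt (sqn n (d x)))" for x
  have fD: "f x \<in> D" if "x \<in> D" for x using into that unfolding D_def by blast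
  have dpos: "0 < sqn n (d x)" if "x \<in> D" for x
  proof -
    have "sqn n (d x) \<noteq> 0"
    proof
      assume "sqn n (d x) = 0"
      then have "\<forall>i<n. d x i = 0" by (simp add: sqn_zero_iff)
      moreover have "\<forall>i\<ge>n. d x i = 0" using that fD[OF that] unfolding d_def D_def by auto
      ultimately have "f x = x" unfolding d_def by (metis eq_iff_diff_eq_0 leI ext)
      with nofix that show False by blast
    qed
    then show ?thesis using sqn_nonneg[of n "d x"] by linarith
  qed
  have uS: "u x \<in> S" if "x \<in> D" for x
  proof -
    have "sqn n (u x) = sqn n (d x) / (sqrt (sqn n (d x)))^2"
      unfolding sqn_def u_def by (simp add: power_divide sum_divide_distrib)
    also have "\<dots> = 1" using dpos[OF that] by simp
    finally show ?thesis
      using that fD[OF that] unfolding S_def u_def d_def D_def by auto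
  qed
  have contd: "continuous_on D (\<lambda>x. f x i)" for i
    using continuous_on_product_then_coordinatewise[OF cont] unfolding D_def .
  have contu: "continuous_on D u"
    unfolding u_def
  proof (rule continuous_on_coordinatewise_then_product)
    fix i
    have c1: "continuous_on D (\<lambda>x. d x j)" for j
      unfolding d_def by (intro continuous_on_diff cont_coord_nat contd)
    have c2: "continuous_on D (\<lambda>x. sqrt (sqn n (d x)))"
      unfolding sqn_def by (intro continuous_on_real_sqrt continuous_on_sum continuous_on_power c1)
    show "continuous_on D (\<lambda>x. d x i / sqrt (sqn n (d x)))"
      apply (rule continuous_on_divide[OF c1 c2])
      using dpos by (metis less_irrefl real_sqrt_eq_zero_cancel_iff)
  qed
  have SD: "S \<subseteq> D" unfolding S_def D_def by auto
  have xu_nonneg: "0 \<le> (\<Sum>i<n. x i * u x i)" if "x \<in> S" for x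
  proof -
    have xD: "x \<in> D" using SD that by auto
    have "(\<Sum>i<n. x i * f x i) \<le> (sqn n x + sqn n (f x)) / 2" by (rule inner_le)
    also have "\<dots> \<le> 1" using that fD[OF xD] unfolding S_def D_def by auto
    finally have "0 \<le> (\<Sum>i<n. x i * d x i)"
      using that unfolding d_def S_def sqn_def by (simp add: right_diff_distrib sum_subtractf power2_eq_square)
    then have "0 \<le> (\<Sum>i<n. x i * d x i) / sqrt (sqn n (d x))" by (intro divide_nonneg_nonneg) (auto simp: sqn_nonneg)
    also have "\<dots> = (\<Sum>i<n. x i * u x i)" unfolding u_def by (simp add: sum_divide_distrib)
    finally show ?thesis .
  qed
  define w where "w = (\<lambda>(t::real,x). (\<lambda>i. (1-t) * x i + t * u x i))"
  have sqnw: "sqn n (w (t,x)) = (1-t)^2 * sqn n x + t^2 * sqn n (u x) + 2*t*(1-t) * (\<Sum>i<n. x i * u x i)" for t x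
  proof -
    have "sqn n (w(t,x)) = (\<Sum>i<n. (1-t)^2 * (x i)^2 + t^2 * (u x i)^2 + 2*t*(1-t) * (x i * u x i))"
      unfolding sqn_def w_def by (intro sum.cong) (auto simp: power2_eq_square algebra_simps)
    also have "\<dots> = (1-t)^2 * sqn n x + t^2 * sqn n (u x) + 2*t*(1-t) * (\<Sum>i<n. x i * u x i)"
      unfolding sqn_def by (simp add: sum.distrib sum_distrib_left)
    finally show ?thesis .
  qed
  have wpos: "0 < sqn n (w (t,x))" if "t \<in> {0..1}" "x \<in> S" for t x
  proof -
    have "sqn n (w (t,x)) \<ge> (1-t)^2 + t^2"
      using sqnw[of t x] uS[of x] SD that xu_nonneg[OF that(2)] unfolding S_def
      by (auto intro!: mult_nonneg_nonneg)
    moreover have "(1-t)^2 + t^2 > 0"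
      by (cases "t = 0") (simp_all add: add_nonneg_pos)
    ultimately show ?thesis by linarith
  qed
  have contu2: "continuous_on ({0..1::real} \<times> S) (\<lambda>z. u (snd z) i)" for i
    apply (rule continuous_on_product_then_coordinatewise)
    apply (rule continuous_on_compose2[OF contu continuous_on_snd])
    using SD by auto
  have h1: "homotopic_with_canon (\<lambda>x. True) S S id u"
  proof (rule homotopic_canonI[where h = "\<lambda>z. (\<lambda>i. w z i / sqrt (sqn n (w z)))"])
    have cw: "continuous_on ({0..1::real} \<times> S) (\<lambda>z. w z i)" for i
      unfolding w_def case_prod_beta
      by (intro continuous_on_add continuous_on_mult continuous_on_diff continuous_on_const
          continuous_on_fst continuous_on_id contu2 continuous_on_compose2[OF cont_coord_nat continuous_on_snd]) auto
    show "continuous_on ({0..1} \<times> S) (\<lambda>z i. w z i / sqrt (sqn n (w z)))"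
    proof (rule continuous_on_coordinatewise_then_product)
      fix i
      have c2: "continuous_on ({0..1::real} \<times> S) (\<lambda>z. sqrt (sqn n (w z)))"
        unfolding sqn_def by (intro continuous_on_real_sqrt continuous_on_sum continuous_on_power cw)
      show "continuous_on ({0..1} \<times> S) (\<lambda>z. w z i / sqrt (sqn n (w z)))"
        apply (rule continuous_on_divide[OF cw c2])
        using wpos by (metis less_irrefl real_sqrt_eq_zero_cancel_iff mem_Times_iff prod.collapse)
    qed
    show "(\<lambda>z i. w z i / sqrt (sqn n (w z))) \<in> {0..1} \<times> S \<rightarrow> S"
    proof
      fix z assume z: "z \<in> {0..1::real} \<times> S"
      obtain t x where zz: "z = (t,x)" by (cases z)
      have p: "0 < sqn n (w z)" using wpos z zz by auto
      have "sqn n (\<lambda>i. w z i / sqrt (sqn n (w z))) = sqn n (w z) / (sqrt (sqn n (w z)))^2"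
        unfolding sqn_def by (simp add: power_divide sum_divide_distrib)
      also have "\<dots> = 1" using p by simp
      finally show "(\<lambda>i. w z i / sqrt (sqn n (w z))) \<in> S"
        using z zz uS[of x] SD unfolding S_def w_def by auto
    qed
    show "(\<lambda>i. w (0, x) i / sqrt (sqn n (w (0, x)))) = id x" if "x \<in> S" for x
      using that unfolding S_def w_def by auto
    show "(\<lambda>i. w (1, x) i / sqrt (sqn n (w (1, x)))) = u x" if "x \<in> S" for x
      using that uS[of x] SD unfolding S_def w_def by auto
  qed
  have h2: "homotopic_with_canon (\<lambda>x. True) S S u (\<lambda>x. u (\<lambda>i. 0))"
  proof (rule homotopic_canonI[where h = "\<lambda>z. u (\<lambda>i. (1 - fst z) * snd z i)"])
    have inD: "(\<lambda>i. (1 - fst z) * snd z i) \<in> D" if "z \<in> {0..1::real} \<times> S" for z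
    proof -
      have "sqn n (\<lambda>i. (1 - fst z) * snd z i) = (1 - fst z)^2 * sqn n (snd z)"
        unfolding sqn_def by (simp add: power_mult_distrib sum_distrib_left)
      also have "\<dots> = (1 - fst z)^2" using that unfolding S_def by auto
      also have "\<dots> \<le> 1" using that by (auto simp: power_le_one)
      finally show ?thesis using that unfolding D_def S_def by auto
    qed
    show "continuous_on ({0..1} \<times> S) (\<lambda>z. u (\<lambda>i. (1 - fst z) * snd z i))"
      apply (rule continuous_on_compose2[OF contu])
       apply (rule continuous_on_coordinatewise_then_product)
       apply (intro continuous_on_mult continuous_on_diff continuous_on_const continuous_on_fst continuous_on_id
          continuous_on_compose2[OF cont_coord_nat continuous_on_snd]; simp)
      using inD by auto
    show "(\<lambda>z. u (\<lambda>i. (1 - fst z) * snd z i)) \<in> {0..1} \<times> S \<rightarrow> S"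
      using inD uS by auto
    show "u (\<lambda>i. (1 - fst (0, x)) * snd (0, x) i) = u x" for x by simp
    show "u (\<lambda>i. (1 - fst (1::real, x)) * snd (1::real, x) i) = u (\<lambda>i. 0)" for x by simp
  qed
  have "contractible S"
    unfolding contractible_def using homotopic_with_trans[OF h1 h2] by blast
  moreover have "nsphere (n - 1) = top_of_set S"
  proof -
    have "{x. (\<Sum>i\<le>n-1. x i ^ 2) = 1 \<and> (\<forall>i>n-1. x i = 0)} = S"
    proof -
      have "{..n-1} = {..<n}" using n by auto
      moreover have "(i > n - 1) = (i \<ge> n)" for i using n by auto
      ultimately show ?thesis unfolding S_def sqn_def by auto
    qed
    then show ?thesis by (simp add: nsphere euclidean_product_topology)
  qed
  ultimately show False by (metis contractible_space_top_of_set non_contractible_space_nsphere)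
qed

definition clip :: "real \<Rightarrow> real \<Rightarrow> real \<Rightarrow> real" where
  "clip a b t = max a (min b t)"

lemma clip_in: "a \<le> b \<Longrightarrow> a \<le> clip a b t \<and> clip a b t \<le> b"
  unfolding clip_def by auto

lemma clip_id: "a \<le> t \<Longrightarrow> t \<le> b \<Longrightarrow> clip a b t = t"
  unfolding clip_def by auto

lemma continuous_on_clip [continuous_intros]:
  "continuous_on S g \<Longrightarrow> continuous_on S (\<lambda>x. clip a b (g x))"
  unfolding clip_def by (intro continuous_intros)

lemma brouwer_box:
  fixes f :: "('i \<Rightarrow> real) \<Rightarrow> ('i \<Rightarrow> real)"
  assumes fin: "finite I" and lohi: "\<And>i. i \<in> I \<Longrightarrow> lo i \<le> hi i"
    and K: "K = {x. (\<forall>i\<in>I. lo i \<le> x i \<and> x i \<le> hi i) \<and> (\<forall>i. i \<notin> I \<longrightarrow> x i = 0)}"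
    and cont: "continuous_on K f" and into: "f \<in> K \<rightarrow> K"
  shows "\<exists>x\<in>K. f x = x"
proof (cases "card I = 0")
  case True
  then have "I = {}" using fin by simp
  then have "K = {\<lambda>i. 0}" unfolding K by auto
  then show ?thesis using into by auto
next
  case False
  define N where "N = card I"
  have N: "0 < N" using False unfolding N_def by simp
  obtain e where e: "bij_betw e {..<N} I"
    using ex_bij_betw_nat_finite[OF fin] unfolding N_def atLeast0LessThan by blast
  define ei where "ei = inv_into {..<N} e"
  have eik: "ei i < N" "e (ei i) = i" if "i \<in> I" for i
    using e that unfolding ei_def bij_betw_def
    by (auto simp: inv_into_into f_inv_into_f)
  have ek: "e k \<in> I" if "k < N" for k using e that unfolding bij_betw_def by auto
  define W where "W = 1 + (\<Sum>i\<in>I. hi i - lo i)"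
  have W: "hi i - lo i \<le> W" if "i \<in> I" for i
  proof -
    have "hi i - lo i \<le> (\<Sum>i\<in>I. hi i - lo i)"
      by (rule member_le_sum) (use that lohi fin in auto)
    then show ?thesis unfolding W_def by simp
  qed
  have Wpos: "0 < W"
  proof -
    have "0 \<le> (\<Sum>i\<in>I. hi i - lo i)" by (rule sum_nonneg) (use lohi in auto)
    then show ?thesis unfolding W_def by simp
  qed
  define R where "R = real N * W"
  have Rpos: "0 < R" unfolding R_def using N Wpos by simp
  define D where "D = {x. sqn N x \<le> 1 \<and> (\<forall>i\<ge>N. x i = 0)}"
  define \<phi> where "\<phi> x = (\<lambda>i. if i \<in> I then clip (lo i) (hi i) (lo i + R * x (ei i)) else 0)" for x :: "nat \<Rightarrow> real"
  define \<psi> where "\<psi> z = (\<lambda>k. if k < N then (z (e k) - lo (e k)) / R else 0)" for z :: "'i \<Rightarrow> real"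
  have \<phi>K: "\<phi> x \<in> K" for x
    unfolding K \<phi>_def using clip_in lohi by auto
  have \<psi>D: "\<psi> z \<in> D" if "z \<in> K" for z
  proof -
    have b: "0 \<le> \<psi> z k \<and> \<psi> z k \<le> 1 / N" if "k < N" for k
    proof -
      have i: "e k \<in> I" using ek that by simp
      have "0 \<le> z (e k) - lo (e k)" "z (e k) - lo (e k) \<le> W"
        using \<open>z \<in> K\<close> i W[OF i] unfolding K by auto
      moreover have "(z (e k) - lo (e k)) / R \<le> W / R"
        by (rule divide_right_mono) (use \<open>z (e k) - lo (e k) \<le> W\<close> Rpos in auto)
      moreover have "W / R = 1 / N" unfolding R_def using Wpos by simp
      ultimately show ?thesis unfolding \<psi>_def using that Rpos by auto
    qed
    have "sqn N (\<psi> z) \<le> (\<Sum>k<N. (1 / N)^2)"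
      unfolding sqn_def by (intro sum_mono power_mono) (use b in auto)
    also have "\<dots> = 1 / N" using N by (simp add: power2_eq_square)
    also have "\<dots> \<le> 1" using N by simp
    finally show ?thesis unfolding D_def \<psi>_def by auto
  qed
  have cphi: "continuous_on UNIV \<phi>"
    unfolding \<phi>_def
    apply (rule continuous_on_coordinatewise_then_product)
    subgoal for i by (cases "i \<in> I") (simp_all add: continuous_on_const continuous_on_clip continuous_on_add continuous_on_mult cont_coord_nat)
    done
  have cpsi: "continuous_on UNIV \<psi>"
    unfolding \<psi>_def
    apply (rule continuous_on_coordinatewise_then_product)
    subgoal for k using Rpos by (cases "k < N") (auto intro!: continuous_on_const continuous_on_divide continuous_on_diff cont_coord_nat)
    done
  define h where "h = \<psi> \<circ> f \<circ> \<phi>"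
  have ch: "continuous_on D h"
  proof -
    have c1: "continuous_on D (\<lambda>x. f (\<phi> x))"
      by (rule continuous_on_compose2[OF cont continuous_on_subset[OF cphi]]) (use \<phi>K in auto)
    have "continuous_on D (\<lambda>x. \<psi> (f (\<phi> x)))"
      by (rule continuous_on_compose2[OF cpsi c1]) auto
    then show ?thesis unfolding h_def comp_def .
  qed
  have hD: "h \<in> D \<rightarrow> D" unfolding h_def using \<psi>D \<phi>K into by (auto simp: Pi_iff)
  obtain x where x: "x \<in> D" "h x = x"
    using brouwer_disc[OF N ch[unfolded D_def] hD[unfolded D_def]] unfolding D_def by blast
  define z where "z = \<phi> x"
  have zK: "z \<in> K" unfolding z_def by (rule \<phi>K)
  have fzK: "f z \<in> K" using into zK by auto
  have "f z = z"
  proof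
    fix i
    show "f z i = z i"
    proof (cases "i \<in> I")
      case True
      have "x (ei i) = h x (ei i)" using x by simp
      also have "\<dots> = (f z i - lo i) / R"
        unfolding h_def \<psi>_def z_def using eik[OF True] by simp
      finally have "lo i + R * x (ei i) = f z i" using Rpos by (simp add: field_simps)
      moreover have "z i = clip (lo i) (hi i) (lo i + R * x (ei i))" unfolding z_def \<phi>_def using True by simp
      ultimately show ?thesis using True fzK clip_id[of "lo i" "f z i" "hi i"] unfolding K by auto
    next
      case False
      then show ?thesis using zK fzK unfolding K by auto
    qed
  qed
  then show ?thesis using zK by blast
qed




lemma finite_max_R:
  assumes "finite C" "C \<noteq> {}" "C \<subseteq> A" "strict_linear_order_on A R"
  shows "\<exists>a\<in>C. \<forall>c\<in>C. c \<noteq> a \<longrightarrow> (a, c) \<in> R"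
  using assms(1,2,3)
proof (induction C rule: finite_ne_induct)
  case (singleton x) then show ?case by auto
next
  case (insert x F)
  then obtain m where m: "m \<in> F" "\<forall>c\<in>F. c \<noteq> m \<longrightarrow> (m, c) \<in> R" by auto
  have tot: "total_on A R" and tr: "trans R" using assms(4) unfolding strict_linear_order_on_def by auto
  have "x \<noteq> m" using insert m by auto
  then have "(x, m) \<in> R \<or> (m, x) \<in> R" using tot insert m unfolding total_on_def by auto
  then show ?case
  proof
    assume "(x, m) \<in> R"
    then have "\<forall>c\<in>insert x F. c \<noteq> x \<longrightarrow> (x, c) \<in> R"
      using m tr insert.hyps(2) by (auto intro: transD[OF tr])
    then show ?thesis by blast
  next
    assume "(m, x) \<in> R"
    then show ?thesis using m by auto
  qed
qed

lemma demand_char: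
  assumes fin: "finite A" and RA: "R \<subseteq> A \<times> A" and slo: "strict_linear_order_on A R"
    and q0: "q None = 0" and b: "0 \<le> b"
  shows "demand A R q b = Some a \<longleftrightarrow>
     (a \<in> A \<and> q (Some a) \<le> b \<and> (\<forall>c\<in>A. (c, a) \<in> R \<longrightarrow> b < q (Some c)))"
proof -
  have tot: "total_on A R" and tr: "trans R" and irr: "irrefl R"
    using slo unfolding strict_linear_order_on_def by auto
  define aff where "aff = affordable A q b"
  define P where "P c \<longleftrightarrow> c \<in> aff \<and> (\<forall>d\<in>aff. d \<noteq> c \<longrightarrow> ext_pref R c d)" for c
  have uniq: "c1 = c2" if "P c1" "P c2" for c1 c2
  proof (rule ccontr)
    assume ne: "c1 \<noteq> c2"
    then have "ext_pref R c1 c2" "ext_pref R c2 c1" using that unfolding P_def by auto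
    then show False
      using irr tr unfolding ext_pref_def irrefl_def
      by (auto split: option.splits dest: transD[OF tr])
  qed
  have ex: "\<exists>c. P c"
  proof (cases "{c\<in>A. q (Some c) \<le> b} = {}")
    case True
    have "P None" unfolding P_def aff_def affordable_def using True q0 b by auto
    then show ?thesis by blast
  next
    case False
    obtain a0 where a0: "a0 \<in> {c\<in>A. q (Some c) \<le> b}"
      "\<forall>c\<in>{c\<in>A. q (Some c) \<le> b}. c \<noteq> a0 \<longrightarrow> (a0, c) \<in> R"
      using finite_max_R[OF _ False _ slo] fin by auto
    have "P (Some a0)" unfolding P_def aff_def affordable_def ext_pref_def
      using a0 by auto
    then show ?thesis by blast
  qed
  have dem: "demand A R q b = (THE c. P c)" unfolding demand_def P_def aff_def by simp
  have Pd: "P (demand A R q b)" unfolding dem using ex uniq by (metis theI)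
  have "demand A R q b = Some a \<longleftrightarrow> P (Some a)"
    using Pd uniq by auto
  also have "\<dots> \<longleftrightarrow> (a \<in> A \<and> q (Some a) \<le> b \<and> (\<forall>c\<in>A. (c, a) \<in> R \<longrightarrow> b < q (Some c)))"
  proof
    assume "P (Some a)"
    then have a: "a \<in> A" "q (Some a) \<le> b" and
      mx: "\<And>c. c \<in> A \<Longrightarrow> q (Some c) \<le> b \<Longrightarrow> c \<noteq> a \<Longrightarrow> (a, c) \<in> R"
      unfolding P_def aff_def affordable_def ext_pref_def by auto
    have "b < q (Some c)" if "c \<in> A" "(c, a) \<in> R" for c
    proof (rule ccontr)
      assume "\<not> b < q (Some c)"
      then have "q (Some c) \<le> b" by simp
      moreover have "c \<noteq> a" using that irr unfolding irrefl_def by auto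
      ultimately have "(a, c) \<in> R" using mx that by auto
      then have "(a, a) \<in> R" using that(2) transD[OF tr] by blast
      then show False using irr unfolding irrefl_def by auto
    qed
    then show "a \<in> A \<and> q (Some a) \<le> b \<and> (\<forall>c\<in>A. (c, a) \<in> R \<longrightarrow> b < q (Some c))" using a by auto
  next
    assume r: "a \<in> A \<and> q (Some a) \<le> b \<and> (\<forall>c\<in>A. (c, a) \<in> R \<longrightarrow> b < q (Some c))"
    have "(a, c) \<in> R" if "c \<in> A" "q (Some c) \<le> b" "c \<noteq> a" for c
    proof -
      have "(a, c) \<in> R \<or> (c, a) \<in> R" using tot that r unfolding total_on_def by auto
      then show ?thesis using r that by force
    qed
    then show "P (Some a)" unfolding P_def aff_def affordable_def ext_pref_def
      using r by (auto split: option.splits)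
  qed
  finally show ?thesis .
qed

lemma demand_neg:
  assumes "q None = 0" "\<forall>c\<in>A. 0 \<le> q (Some c)" "b < 0"
  shows "demand A R q b = demand A R q (-1)"
proof -
  have "affordable A q b = {}"
    using assms unfolding affordable_def by fastforce
  moreover have "affordable A q (-1) = {}"
    using assms unfolding affordable_def by fastforce
  ultimately show ?thesis unfolding demand_def by simp
qed


lemma null_outside01:
  assumes rd: "real_distribution M" and M01: "measure M {0..1} = 1"
    and A: "A \<in> sets borel" and dis: "A \<inter> {0..1} = {}"
  shows "A \<in> null_sets M"
proof -
  interpret real_distribution M by (rule rd)
  have As: "A \<in> sets M" using A by simp
  have "measure M (A \<union> {0..1}) = measure M A + measure M {0..1}"
    by (rule finite_measure_Union) (use As dis in auto)
  moreover have "measure M (A \<union> {0..1}) \<le> 1" by (rule prob_le_1)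
  ultimately have "measure M A = 0" using M01 measure_nonneg[of M A] by linarith
  then show ?thesis using As by (simp add: emeasure_eq_measure null_setsI)
qed

lemma measure_lessThan_cdf:
  assumes rd: "real_distribution M" and cont: "\<forall>t. isCont (cdf M) t"
  shows "measure M {..<t} = cdf M t"
proof -
  interpret real_distribution M by (rule rd)
  have "measure M {t} = 0" using cont isCont_cdf by blast
  moreover have "measure M {..<t} = measure M ({..t} - {t})"
    by (rule arg_cong[where f="measure M"]) auto
  moreover have "measure M ({..t} - {t}) = measure M {..t} - measure M {t}"
    by (rule finite_measure_Diff) auto
  ultimately show ?thesis by (simp add: cdf_def)
qed

lemma demand_measure:
  assumes rd: "real_distribution M" and M01: "measure M {0..1} = 1"
    and cont: "\<forall>t. isCont (cdf M) t"
    and fin: "finite A" and RA: "R \<subseteq> A \<times> A" and slo: "strict_linear_order_on A R"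
    and q0: "q None = 0" and qr: "\<forall>c\<in>A. 0 \<le> q (Some c) \<and> q (Some c) \<le> 1"
    and a: "a \<in> A"
  shows "measure M {b. demand A R q b = Some a}
     = max 0 (cdf M (Min (insert 2 ((\<lambda>c. q (Some c)) ` {c\<in>A. (c,a)\<in>R}))) - cdf M (q (Some a)))"
proof -
  interpret real_distribution M by (rule rd)
  define S where "S = {c\<in>A. (c,a)\<in>R}"
  define mb where "mb = Min (insert 2 ((\<lambda>c. q (Some c)) ` S))"
  have finS: "finite S" unfolding S_def using fin by simp
  define E0 where "E0 = {b. demand A R q b = Some a}"
  define K1 where "K1 = {b. 0 \<le> b \<and> q (Some a) \<le> b \<and> (\<forall>c\<in>S. b < q (Some c))}"
  define T where "T = {q (Some a)..<mb}"
  define N where "N = E0 \<inter> {..<0}"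
  have E0eq: "E0 = K1 \<union> N"
  proof -
    have "b \<in> E0 \<longleftrightarrow> b \<in> K1" if "0 \<le> b" for b
      unfolding E0_def K1_def S_def using demand_char[where q=q and A=A and R=R and b=b and a=a, OF fin RA slo q0 that] a that by auto
    then show ?thesis unfolding N_def K1_def by force
  qed
  have K1s: "K1 \<in> sets borel"
  proof -
    have "K1 = {0..} \<inter> {q (Some a)..} \<inter> {b. \<forall>c\<in>S. b < q (Some c)}"
      unfolding K1_def by auto
    moreover have "{b::real. \<forall>c\<in>S. b < q (Some c)} \<in> sets borel"
      using finS by measurable
    ultimately show ?thesis by simp
  qed
  have Ns: "N \<in> null_sets M"
  proof -
    have dn: "demand A R q b = demand A R q (-1)" if "b < 0" for b
      by (rule demand_neg[where q=q and A=A and R=R, OF q0]) (use qr that in auto)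
    have "N = (if demand A R q (-1) = Some a then {..<0} else {})"
    proof -
      have "b \<in> N \<longleftrightarrow> b \<in> (if demand A R q (-1) = Some a then {..<0} else {})" for b
      proof (cases "b < 0")
        case True
        then show ?thesis unfolding N_def E0_def using dn[OF True] by simp
      next
        case False
        then show ?thesis unfolding N_def by simp
      qed
      then show ?thesis by blast
    qed
    then have "N = {} \<or> N = {..<0}" by auto
    moreover have "{..<0} \<in> null_sets M" by (rule null_outside01[OF rd M01]) auto
    ultimately show ?thesis by auto
  qed
  have K1eq: "K1 = T \<union> (K1 \<inter> {2..})"
  proof -
    have mble: "mb \<le> q (Some c)" if "c \<in> S" for c
      unfolding mb_def using finS that by (intro Min_le) auto
    have mb2: "mb \<le> 2" unfolding mb_def using finS by (intro Min_le) auto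
    have "T \<subseteq> K1" unfolding T_def K1_def using qr a mble
      by (auto intro: order.strict_trans2)
    moreover have "b \<in> T" if "b \<in> K1" "b < 2" for b
    proof -
      have "b < mb" unfolding mb_def using finS that unfolding K1_def
        by (subst Min_gr_iff) auto
      then show ?thesis using that unfolding T_def K1_def by auto
    qed
    ultimately show ?thesis by force
  qed
  have Ts: "T \<in> sets borel" unfolding T_def by simp
  have K2: "K1 \<inter> {2..} \<in> null_sets M"
    by (rule null_outside01[OF rd M01]) (use K1s in auto)
  have "measure M E0 = measure M K1"
    unfolding E0eq by (rule measure_Un_null_set) (use K1s Ns in auto)
  also have "\<dots> = measure M T"
    by (subst K1eq, rule measure_Un_null_set) (use Ts K2 in auto)
  also have "\<dots> = max 0 (cdf M mb - cdf M (q (Some a)))"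
  proof (cases "q (Some a) < mb")
    case True
    have "T = {..<mb} - {..<q (Some a)}" unfolding T_def by auto
    then have "measure M T = measure M {..<mb} - measure M {..<q (Some a)}"
      using True finite_measure_Diff[of "{..<mb}" "{..<q (Some a)}"] by simp
    also have "\<dots> = cdf M mb - cdf M (q (Some a))"
      using measure_lessThan_cdf[OF rd cont] by simp
    finally show ?thesis using cdf_nondecreasing[of "q (Some a)" mb] True by simp
  next
    case False
    then have "T = {}" unfolding T_def by auto
    then show ?thesis using cdf_nondecreasing[of mb "q (Some a)"] False by simp
  qed
  finally show ?thesis unfolding E0_def mb_def S_def .
qed

lemma cont_coord_gen [continuous_intros]:
  "continuous_on S (\<lambda>x::'i\<Rightarrow>real. x i)"
  by (rule continuous_on_subset[OF continuous_on_product_coordinates]) simp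

lemma clip_fix:
  assumes "lo \<le> hi" "lo \<le> t" "t \<le> hi" "t = clip lo hi (t + d)"
  shows "(t = lo \<and> d \<le> 0) \<or> (t = hi \<and> 0 \<le> d) \<or> d = 0"
  using assms unfolding clip_def by (auto simp: max_def min_def split: if_splits)

lemma continuous_on_Min_insert:
  assumes "finite S" "\<And>j. j \<in> S \<Longrightarrow> continuous_on K (g j)"
  shows "continuous_on K (\<lambda>z. Min (insert (c::real) ((\<lambda>j. g j z) ` S)))"
  using assms
proof (induction S rule: finite_induct)
  case empty
  then show ?case by (simp add: continuous_on_const)
next
  case (insert j S)
  have eq: "Min (insert c ((\<lambda>j. g j z) ` insert j S)) = min (g j z) (Min (insert c ((\<lambda>j. g j z) ` S)))" for z
  proof -
    have "insert c ((\<lambda>j. g j z) ` insert j S) = insert (g j z) (insert c ((\<lambda>j. g j z) ` S))" by auto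
    then show ?thesis using insert.hyps(1) by (simp del: Min_insert add: Min.insert)
  qed
  show ?case unfolding eq
    by (intro continuous_on_min insert.prems insert.IH) auto
qed

lemma sum_eq_card_all1:
  assumes "finite V" "\<And>v. v \<in> V \<Longrightarrow> f v \<le> (1::real)" "(\<Sum>v\<in>V. f v) = real (card V)" "v \<in> V"
  shows "f v = 1"
proof -
  have "(\<Sum>v\<in>V. 1 - f v) = 0" using assms(3) by (simp add: sum_subtractf)
  then have "\<forall>v\<in>V. 1 - f v = 0" using assms(1,2) by (subst (asm) sum_nonneg_eq_0_iff) auto
  then show ?thesis using assms(4) by auto
qed

theorem mainTheorem6:
  fixes V :: "'v set" and A :: "'a set" and R :: "'v \<Rightarrow> ('a \<times> 'a) set"
    and s B :: real and I :: "real measure"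
  assumes "election V A R"
    and "0 < B" and "B \<le> real (card A)"
    and "0 < s"
    and "real_distribution I"
    and "measure I {0..1} = 1"
    and "\<forall>t. isCont (cdf I) t"
  shows "\<exists>x y p. SLEO V A R s B I x y p"
proof -
  note rd = assms(5) and M01 = assms(6) and ccdf = assms(7)
  have finV: "finite V" and Vne: "V \<noteq> {}" and finA: "finite A"
    and RA: "\<And>v. v \<in> V \<Longrightarrow> R v \<subseteq> A \<times> A"
    and slo: "\<And>v. v \<in> V \<Longrightarrow> strict_linear_order_on A (R v)"
    using assms(1) unfolding election_def by auto
  interpret real_distribution I by (rule rd)
  define n where "n = real (card V)"
  define F where "F = cdf I"
  have contF: "continuous_on UNIV F"
    unfolding F_def using ccdf by (simp add: continuous_at_imp_continuous_on)
  have F1: "F 1 = 1"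
  proof -
    have "measure I {0..1} \<le> measure I {..1}" by (rule finite_measure_mono) auto
    then show ?thesis unfolding F_def using M01 prob_le_1[of "{..1}"] by (simp add: cdf_def)
  qed
  have Fle1: "F t \<le> 1" for t unfolding F_def by (rule cdf_bounded_prob)
  define J :: "('v option \<times> 'a option) set" where
    "J = (\<lambda>(v,a). (Some v, Some a)) ` (V \<times> A) \<union> (\<lambda>a. (None, Some a)) ` A \<union> {(None, None)}"
  have finJ: "finite J" unfolding J_def using finV finA by simp
  define lo :: "'v option \<times> 'a option \<Rightarrow> real" where "lo i = (if i = (None, None) then -1 else 0)" for i
  define hi :: "'v option \<times> 'a option \<Rightarrow> real" where "hi i = (if i = (None, None) then n else 1)" for i
  have n0: "0 \<le> n" unfolding n_def by simp
  have lohi: "lo i \<le> hi i" for i unfolding lo_def hi_def using n0 by auto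
  define K where "K = {x. (\<forall>i\<in>J. lo i \<le> x i \<and> x i \<le> hi i) \<and> (\<forall>i. i \<notin> J \<longrightarrow> x i = 0)}"
  define pr :: "('v option \<times> 'a option \<Rightarrow> real) \<Rightarrow> 'v \<Rightarrow> 'a option \<Rightarrow> real" where
    "pr z v = (\<lambda>c. case c of None \<Rightarrow> 0 | Some a \<Rightarrow> z (Some v, Some a))" for z v
  define mbt where "mbt z v a = Min (insert 2 ((\<lambda>c. z (Some v, Some c)) ` {c\<in>A. (c,a) \<in> R v}))" for z :: "'v option \<times> 'a option \<Rightarrow> real" and v a
  define X where "X z v a = max 0 (F (mbt z v a) - F (z (Some v, Some a)))" for z v a
  define rv where "rv z a = (\<Sum>v\<in>V. z (Some v, Some a))" for z :: "'v option \<times> 'a option \<Rightarrow> real" and a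
  define G where "G z = (\<lambda>i. if i \<notin> J then 0 else (case i of
       (Some v, Some a) \<Rightarrow> clip 0 1 (z i + (s * X z v a - z (None, Some a)))
     | (None, Some a) \<Rightarrow> clip 0 1 (z i + (rv z a - z (None, None)))
     | (None, None) \<Rightarrow> clip (-1) n (z i + ((\<Sum>a\<in>A. z (None, Some a)) - B))
     | (Some v, None) \<Rightarrow> 0))" for z
  have contX: "continuous_on K (\<lambda>z. X z v a)" for v a
  proof -
    have cm: "continuous_on K (\<lambda>z. mbt z v a)"
      unfolding mbt_def
      apply (rule continuous_on_Min_insert[where g="\<lambda>c z. z (Some v, Some c)"])
      using finA apply simp
      apply (rule cont_coord_gen)
      done
    have c1: "continuous_on K (\<lambda>z. F (mbt z v a))" by (rule continuous_on_compose2[OF contF cm]) simp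
    have c2: "continuous_on K (\<lambda>z. F (z (Some v, Some a)))" by (rule continuous_on_compose2[OF contF cont_coord_gen]) simp
    show ?thesis unfolding X_def
      by (intro continuous_on_max continuous_on_const continuous_on_diff c1 c2)
  qed
  have contGi: "continuous_on K (\<lambda>z. G z i)" for i
  proof (cases "i \<in> J")
    case False
    then have "(\<lambda>z. G z i) = (\<lambda>z. 0)" by (simp add: G_def)
    then show ?thesis by (metis continuous_on_const)
  next
    case iJ: True
    from iJ have "(\<exists>v a. i = (Some v, Some a)) \<or> (\<exists>a. i = (None, Some a)) \<or> i = (None, None)"
      unfolding J_def by fastforce
    then show ?thesis
    proof (elim disjE exE)
      fix v a assume i: "i = (Some v, Some a)"
      have "(\<lambda>z. G z i) = (\<lambda>z. clip 0 1 (z i + (s * X z v a - z (None, Some a))))"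
        using iJ unfolding i G_def by simp
      then show ?thesis
        by (simp only:) (intro continuous_on_clip continuous_on_add continuous_on_diff continuous_on_mult contX cont_coord_gen continuous_on_const)
    next
      fix a assume i: "i = (None, Some a)"
      have "(\<lambda>z. G z i) = (\<lambda>z. clip 0 1 (z i + ((\<Sum>v\<in>V. z (Some v, Some a)) - z (None, None))))"
        using iJ unfolding i G_def rv_def by simp
      then show ?thesis
        by (simp only:) (intro continuous_on_clip continuous_on_add continuous_on_diff continuous_on_sum cont_coord_gen continuous_on_const)
    next
      assume i: "i = (None, None)"
      have "(\<lambda>z. G z i) = (\<lambda>z. clip (-1) n (z i + ((\<Sum>a\<in>A. z (None, Some a)) - B)))"
        using iJ unfolding i G_def by simp
      then show ?thesis
        by (simp only:) (intro continuous_on_clip continuous_on_add continuous_on_diff continuous_on_sum cont_coord_gen continuous_on_const)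
    qed
  qed
  have contG: "continuous_on K G"
    by (rule continuous_on_coordinatewise_then_product[OF contGi])
  have intoG: "G \<in> K \<rightarrow> K"
  proof (rule Pi_I)
    fix z assume "z \<in> K"
    have b: "lo i \<le> G z i \<and> G z i \<le> hi i" if iJ: "i \<in> J" for i
    proof -
      from iJ have "(\<exists>v a. i = (Some v, Some a)) \<or> (\<exists>a. i = (None, Some a)) \<or> i = (None, None)"
        unfolding J_def by fastforce
      then show ?thesis
      proof (elim disjE exE)
        fix v a assume i: "i = (Some v, Some a)"
        show ?thesis using iJ clip_in[of 0 1] unfolding i G_def lo_def hi_def by simp
      next
        fix a assume i: "i = (None, Some a)"
        show ?thesis using iJ clip_in[of 0 1] unfolding i G_def lo_def hi_def by simp
      next
        assume i: "i = (None, None)"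
        show ?thesis using iJ clip_in[of "-1" n] n0 unfolding i G_def lo_def hi_def by simp
      qed
    qed
    have o: "G z i = 0" if "i \<notin> J" for i using that by (simp add: G_def)
    show "G z \<in> K" unfolding K_def using b o by blast
  qed
  obtain z where zK: "z \<in> K" and zfix: "G z = z"
    using brouwer_box[OF finJ lohi K_def contG intoG] by blast
  have zJ: "\<And>i. i \<in> J \<Longrightarrow> lo i \<le> z i \<and> z i \<le> hi i" using zK unfolding K_def by blast
  define Y where "Y a = z (None, Some a)" for a
  define L where "L = z (None, None)"
  define P where "P v a = z (Some v, Some a)" for v a
  have inJ1: "(Some v, Some a) \<in> J" if "v \<in> V" "a \<in> A" for v a unfolding J_def using that by auto
  have inJ2: "(None, Some a) \<in> J" if "a \<in> A" for a unfolding J_def using that by auto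
  have inJ3: "(None, None) \<in> J" unfolding J_def by auto
  have Pb: "0 \<le> P v a \<and> P v a \<le> 1" if "v \<in> V" "a \<in> A" for v a
    using zJ[OF inJ1[OF that]] unfolding P_def lo_def hi_def by simp
  have Yb: "0 \<le> Y a \<and> Y a \<le> 1" if "a \<in> A" for a
    using zJ[OF inJ2[OF that]] unfolding Y_def lo_def hi_def by simp
  have Lb: "-1 \<le> L \<and> L \<le> n"
    using zJ[OF inJ3] unfolding L_def lo_def hi_def by simp
  have fixP: "P v a = clip 0 1 (P v a + (s * X z v a - Y a))" if "v \<in> V" "a \<in> A" for v a
  proof -
    have "G z (Some v, Some a) = z (Some v, Some a)" using zfix by simp
    then show ?thesis using inJ1[OF that] unfolding G_def P_def Y_def by simp
  qed
  have fixY: "Y a = clip 0 1 (Y a + (rv z a - L))" if "a \<in> A" for a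
  proof -
    have "G z (None, Some a) = z (None, Some a)" using zfix by simp
    then show ?thesis using inJ2[OF that] unfolding G_def L_def Y_def by simp
  qed
  have fixL: "L = clip (-1) n (L + ((\<Sum>a\<in>A. Y a) - B))"
  proof -
    have "G z (None, None) = z (None, None)" using zfix by simp
    then show ?thesis using inJ3 unfolding G_def L_def Y_def by simp
  qed
  have rvP: "rv z a = (\<Sum>v\<in>V. P v a)" for a unfolding rv_def P_def by simp
  have rvb: "0 \<le> rv z a \<and> rv z a \<le> n" if "a \<in> A" for a
  proof -
    have "0 \<le> (\<Sum>v\<in>V. P v a)" by (rule sum_nonneg) (use Pb that in auto)
    moreover have "(\<Sum>v\<in>V. P v a) \<le> (\<Sum>v\<in>V. 1)" by (rule sum_mono) (use Pb that in auto)
    ultimately show ?thesis unfolding rvP n_def by simp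
  qed
  have X1: "X z v a = 0" if "P v a = 1" for v a
  proof -
    have "F (mbt z v a) - F (z (Some v, Some a)) \<le> 0"
      using that F1 Fle1[of "mbt z v a"] unfolding P_def by simp
    then show ?thesis unfolding X_def by simp
  qed
  have cond2: "s * X z v a \<le> Y a \<and> (s * X z v a < Y a \<longrightarrow> P v a = 0)" if "v \<in> V" "a \<in> A" for v a
  proof -
    have "(P v a = 0 \<and> s * X z v a - Y a \<le> 0) \<or> (P v a = 1 \<and> 0 \<le> s * X z v a - Y a) \<or> s * X z v a - Y a = 0"
      using clip_fix[of 0 1 "P v a" "s * X z v a - Y a"] Pb[OF that] fixP[OF that] by simp
    then show ?thesis using X1[of v a] Yb[OF that(2)] by auto
  qed
  have condY: "(Y a = 0 \<and> rv z a - L \<le> 0) \<or> (Y a = 1 \<and> 0 \<le> rv z a - L) \<or> rv z a - L = 0" if "a \<in> A" for a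
    using clip_fix[of 0 1 "Y a" "rv z a - L"] Yb[OF that] fixY[OF that] by simp
  have condL: "(L = -1 \<and> (\<Sum>a\<in>A. Y a) - B \<le> 0) \<or> (L = n \<and> 0 \<le> (\<Sum>a\<in>A. Y a) - B) \<or> (\<Sum>a\<in>A. Y a) - B = 0"
    using clip_fix[of "-1" n L "(\<Sum>a\<in>A. Y a) - B"] Lb n0 fixL by simp
  have sumY: "(\<Sum>a\<in>A. Y a) = B"
  proof -
    consider (m1) "L = -1" "(\<Sum>a\<in>A. Y a) - B \<le> 0" | (mn) "L = n" "0 \<le> (\<Sum>a\<in>A. Y a) - B"
      | (eq) "(\<Sum>a\<in>A. Y a) - B = 0" using condL by blast
    then show ?thesis
    proof cases
      case m1
      have "Y a = 1" if "a \<in> A" for a using condY[OF that] rvb[OF that] m1(1) by auto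
      then have "(\<Sum>a\<in>A. Y a) = real (card A)" by simp
      then show ?thesis using m1 assms(3) by linarith
    next
      case mn
      have pos: "(\<Sum>a\<in>A. Y a) > 0" using mn assms(2) by linarith
      obtain a where a: "a \<in> A" "Y a > 0"
      proof (rule ccontr)
        assume "\<not> thesis"
        then have "\<forall>a\<in>A. Y a \<le> 0" using that by force
        then have "(\<Sum>a\<in>A. Y a) \<le> 0" by (intro sum_nonpos) auto
        then show False using pos by simp
      qed
      have rvn: "rv z a = n" using condY[OF a(1)] rvb[OF a(1)] mn(1) a(2) by auto
      obtain v where v: "v \<in> V" using Vne by blast
      have "P v a = 1"
        by (rule sum_eq_card_all1[OF finV, where f="\<lambda>v. P v a"]) (use Pb a(1) rvn rvP v in \<open>auto simp: n_def\<close>)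
      then show ?thesis using cond2[OF v a(1)] X1[of v a] a(2) by simp
    next
      case eq then show ?thesis by simp
    qed
  qed
  have cond3: "(\<Sum>a\<in>A. rv z a * z' a) \<le> (\<Sum>a\<in>A. rv z a * Y a)"
    if zz1: "\<forall>a\<in>A. z' a \<in> {0..1}" and zz2: "(\<Sum>a\<in>A. z' a) = B" for z' :: "'a \<Rightarrow> real"
  proof -
    have trm: "(rv z a - L) * (z' a - Y a) \<le> 0" if aA: "a \<in> A" for a
    proof -
      have "0 \<le> z' a" "z' a \<le> 1" using zz1 aA by auto
      then show ?thesis using condY[OF aA]
        by (auto intro: mult_nonpos_nonneg mult_nonneg_nonpos)
    qed
    have "(\<Sum>a\<in>A. (rv z a - L) * (z' a - Y a)) \<le> 0" by (rule sum_nonpos) (use trm in auto)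
    moreover have "(\<Sum>a\<in>A. (rv z a - L) * (z' a - Y a))
        = (\<Sum>a\<in>A. rv z a * z' a) - (\<Sum>a\<in>A. rv z a * Y a) - L * (\<Sum>a\<in>A. z' a) + L * (\<Sum>a\<in>A. Y a)"
    proof -
      have "(\<Sum>a\<in>A. (rv z a - L) * (z' a - Y a)) = (\<Sum>a\<in>A. rv z a * z' a - rv z a * Y a - L * z' a + L * Y a)"
        by (rule sum.cong) (auto simp: algebra_simps)
      also have "\<dots> = (\<Sum>a\<in>A. rv z a * z' a) - (\<Sum>a\<in>A. rv z a * Y a) - (\<Sum>a\<in>A. L * z' a) + (\<Sum>a\<in>A. L * Y a)"
        by (simp add: sum.distrib sum_subtractf)
      also have "\<dots> = (\<Sum>a\<in>A. rv z a * z' a) - (\<Sum>a\<in>A. rv z a * Y a) - L * (\<Sum>a\<in>A. z' a) + L * (\<Sum>a\<in>A. Y a)"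
        by (simp add: sum_distrib_left)
      finally show ?thesis .
    qed
    ultimately show ?thesis using zz2 sumY by simp
  qed
  define p where "p = pr z"
  define x where "x v c = measure I {b. demand A (R v) (p v) b = c}" for v c
  have pS: "p v (Some a) = P v a" for v a unfolding p_def pr_def P_def by simp
  have pN: "p v None = 0" for v unfolding p_def pr_def by simp
  have Xeq: "x v (Some a) = X z v a" if v: "v \<in> V" and a: "a \<in> A" for v a
  proof -
    have "x v (Some a) = max 0 (cdf I (Min (insert 2 ((\<lambda>c. p v (Some c)) ` {c\<in>A. (c,a)\<in>R v}))) - cdf I (p v (Some a)))"
      unfolding x_def
      by (rule demand_measure[where q="p v", OF rd M01 ccdf finA RA[OF v] slo[OF v] pN])
         (use Pb v a pS in auto)
    then show ?thesis unfolding X_def mbt_def F_def pS P_def by simp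
  qed
  have "SLEO V A R s B I x Y p"
    unfolding SLEO_def
  proof (intro conjI ballI allI impI)
    fix v c assume "v \<in> V" "c \<in> insert None (Some ` A)"
    then show "p v c \<in> {0..1}" using Pb pS pN by auto
  next
    fix v c assume "v \<in> V" "c \<in> insert None (Some ` A)"
    show "x v c \<in> {0..1}" unfolding x_def using prob_le_1 by auto
  next
    fix v assume "v \<in> V" show "p v None = 0" by (rule pN)
  next
    fix a assume "a \<in> A" then show "Y a \<in> {0..1}" using Yb by auto
  next
    fix v c assume "v \<in> V" "c \<in> insert None (Some ` A)"
    show "x v c = measure I {b. demand A (R v) (p v) b = c}" unfolding x_def ..
  next
    fix v a assume "v \<in> V" "a \<in> A"
    then show "s * x v (Some a) \<le> Y a" using cond2 Xeq by simp
  next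
    fix v a assume "v \<in> V" "a \<in> A" "s * x v (Some a) < Y a"
    then show "p v (Some a) = 0" using cond2 Xeq pS by simp
  next
    show "(\<Sum>a\<in>A. Y a) = B" by (rule sumY)
  next
    fix z' :: "'a \<Rightarrow> real"
    assume "(\<forall>a\<in>A. z' a \<in> {0..1}) \<and> (\<Sum>a\<in>A. z' a) = B"
    moreover have "(\<Sum>v\<in>V. p v (Some a)) = rv z a" for a unfolding rvP pS ..
    ultimately show "(\<Sum>a\<in>A. (\<Sum>v\<in>V. p v (Some a)) * z' a) \<le> (\<Sum>a\<in>A. (\<Sum>v\<in>V. p v (Some a)) * Y a)"
      using cond3 by simp
  qed
  then show ?thesis by blast
qed


end
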